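(* Let $M$, $N$ and $Y$ be real normed spaces. Assume that $T\in L(M\oplus_\infty N,Y)$ and $m\in M$, $n\in N$ are such that $m+n$ lies in the unit sphere of $M\oplus_\infty N$, $\Vert n\Vert<1$ and $\Vert T(m+n)\Vert=\Vert T\Vert$. Then $\Vert T(m)\Vert=\Vert T\Vert$.
   Context: $M\oplus_\infty N$ denotes the direct sum with norm $\Vert m+n\Vert=\max\{\Vert m\Vert,\Vert n\Vert\}$. $L(X,Y)$ is the space of bounded linear operators with the operator norm. *)

theory Defs
  imports "HOL-Analysis.Analysis"
begin

text \<open>The l-infinity direct sum M (+)_inf N is modelled by the product type
  'm \<times> 'n equipped with the max norm (the library's product norm is the l2 one,
  so we use an explicit norm). The element m + n of the direct sum is the pair (m, n);
  m itself is (m, 0).\<close>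

definition inf_norm :: "'m::real_normed_vector \<times> 'n::real_normed_vector \<Rightarrow> real" where
  "inf_norm p = max (norm (fst p)) (norm (snd p))"

definition bounded_linear_inf ::
  "('m::real_normed_vector \<times> 'n::real_normed_vector \<Rightarrow> 'y::real_normed_vector) \<Rightarrow> bool" where
  "bounded_linear_inf T \<longleftrightarrow> linear T \<and> (\<exists>K. \<forall>p. norm (T p) \<le> K * inf_norm p)"

definition opnorm_inf ::
  "('m::real_normed_vector \<times> 'n::real_normed_vector \<Rightarrow> 'y::real_normed_vector) \<Rightarrow> real" where
  "opnorm_inf T = Sup {norm (T p) | p. inf_norm p \<le> 1}"

end

theory Submission
  imports Defs
begin

theorem lemma4p1:
  fixes T :: "'m::real_normed_vector \<times> 'n::real_normed_vector \<Rightarrow> 'y::real_normed_vector"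
    and m :: 'm and n :: 'n
  assumes "bounded_linear_inf T"
    and "inf_norm (m, n) = 1"
    and "norm n < 1"
    and "norm (T (m, n)) = opnorm_inf T"
  shows "norm (T (m, 0)) = opnorm_inf T"
proof (cases "n = 0")
  case True
  then show ?thesis using assms(4) by simp
next
  case False
  have lin: "linear T" and "\<exists>K. \<forall>p. norm (T p) \<le> K * inf_norm p"
    using assms(1) unfolding bounded_linear_inf_def by auto
  then obtain K where K: "\<And>p. norm (T p) \<le> K * inf_norm p" by blast
  have bdd: "bdd_above {norm (T p) | p. inf_norm p \<le> 1}"
  proof (rule bdd_aboveI[where M="max K 0"])
    fix x assume "x \<in> {norm (T p) | p. inf_norm p \<le> 1}"
    then obtain p where p: "x = norm (T p)" "inf_norm p \<le> 1" by blast
    have "0 \<le> inf_norm p" unfolding inf_norm_def by (simp add: le_max_iff_disj)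
    have "K * inf_norm p \<le> max K 0 * inf_norm p"
      using \<open>0 \<le> inf_norm p\<close> by (simp add: mult_right_mono)
    also have "\<dots> \<le> max K 0" using p(2) \<open>0 \<le> inf_norm p\<close>
      by (simp add: mult_left_le)
    finally show "x \<le> max K 0" using K[of p] p(1) by linarith
  qed
  have le: "norm (T p) \<le> opnorm_inf T" if "inf_norm p \<le> 1" for p
    unfolding opnorm_inf_def using that by (intro cSup_upper[OF _ bdd]) (metis (mono_tags) mem_Collect_eq prod.collapse)
  have nm: "norm m = 1" using assms(2,3) unfolding inf_norm_def by (auto simp: max_def split: if_splits)
  define k where "k = norm n"
  have k0: "0 < k" "k < 1" using False assms(3) k_def by auto
  have a_le: "norm (T (m, 0)) \<le> opnorm_inf T" by (rule le) (simp add: inf_norm_def nm)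
  have b_le: "norm (T (m, (1/k) *\<^sub>R n)) \<le> opnorm_inf T"
    by (rule le) (simp add: inf_norm_def nm k_def)
  have eq: "(m, n) = (1 - k) *\<^sub>R (m, 0) + k *\<^sub>R (m, (1/k) *\<^sub>R n)"
    using k0 by (simp add: algebra_simps)
  have "T (m, n) = (1 - k) *\<^sub>R T (m, 0) + k *\<^sub>R T (m, (1/k) *\<^sub>R n)"
  proof -
    have "T (m, n) = T ((1 - k) *\<^sub>R (m, 0) + k *\<^sub>R (m, (1/k) *\<^sub>R n))"
      using eq by (rule arg_cong)
    also have "\<dots> = (1 - k) *\<^sub>R T (m, 0) + k *\<^sub>R T (m, (1/k) *\<^sub>R n)"
      by (simp only: linear_add[OF lin] linear_scale[OF lin])
    finally show ?thesis .
  qed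
  hence "norm (T (m, n)) \<le> (1 - k) * norm (T (m, 0)) + k * norm (T (m, (1/k) *\<^sub>R n))"
    using k0 by (metis (no_types) abs_of_pos diff_gt_0_iff_gt norm_scaleR norm_triangle_ineq)
  also have "\<dots> \<le> (1 - k) * norm (T (m, 0)) + k * opnorm_inf T"
    using b_le k0 by (simp add: mult_left_mono)
  finally have "opnorm_inf T \<le> (1 - k) * norm (T (m, 0)) + k * opnorm_inf T" using assms(4) by simp
  hence "(1 - k) * opnorm_inf T \<le> (1 - k) * norm (T (m, 0))" by (simp add: algebra_simps)
  hence "opnorm_inf T \<le> norm (T (m, 0))" using k0 by simp
  with a_le show ?thesis by simp
qed

end
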